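(* Let $d\ge5$ and assume (H0) and (H4). Suppose $X_1,\dots,X_n\sim\mu$ i.i.d. and $Y_1,\dots,Y_n\sim\nu$ i.i.d., with the $X$-sample independent of the $Y$-sample. Then there is a constant $c>0$ depending only on $d,\alpha,\mathcal X,\mathcal Y,x_0,y_0$ such that for all $n\ge1$, $$\sup_{\mu\in\mathcal P(\mathcal X),\ \nu\in\mathcal P(\mathcal Y)}\mathbb E_{\mu,\nu}\big|\mathcal T_c(\mu_n,\nu_n)-\mathcal T_c(\mu,\nu)\big|\ge c\,\lambda\,n^{-\alpha/d}.$$
   Context: (H0): $c(x,y)=h(x-y)$, $h:\mathbb R^d\to[0,\infty)$ convex, even, lower semi-continuous. (H4): $\mathcal X,\mathcal Y\subseteq\mathbb R^d$ are convex with nonempty interior, $h$ is differentiable on $\mathcal Z=\mathcal X-\mathcal Y$, and there exist $\lambda>0$, $\alpha\in(0,2]$ and $z_0=x_0-y_0$ with $x_0\in\mathrm{int}(\mathcal X)$, $y_0\in\mathrm{int}(\mathcal Y)$ such that for all $z\in\mathcal Z$: $h(z)-h(z_0)\ge\lambda\|z-z_0\|^\alpha$ if $\alpha\le1$, and $h(z)-h(z_0)\ge\langle\nabla h(z_0),z-z_0\rangle+\lambda\|z-z_0\|^\alpha$ if $\alpha>1$. $\mathcal T_c(\mu,\nu)=\inf_{\pi\in\Pi(\mu,\nu)}\int c\,d\pi$; $\mu_n,\nu_n$ are the empirical measures. *)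

theory Defs
  imports "HOL-Probability.Probability"
begin

definition lsc :: "('a::topological_space \<Rightarrow> real) \<Rightarrow> bool" where
  "lsc f \<longleftrightarrow> (\<forall>x. \<forall>t. t < f x \<longrightarrow> eventually (\<lambda>y. t < f y) (at x))"

definition prob_measures :: "'a::euclidean_space set \<Rightarrow> 'a measure set" where
  "prob_measures S = {\<mu>. sets \<mu> = sets (borel :: 'a measure) \<and> prob_space \<mu> \<and> (AE x in \<mu>. x \<in> S)}"

definition couplings :: "'a::euclidean_space measure \<Rightarrow> 'a measure \<Rightarrow> ('a \<times> 'a) measure set" where
  "couplings \<mu> \<nu> = {\<pi>. sets \<pi> = sets (borel :: ('a \<times> 'a) measure) \<and> prob_space \<pi> \<and>
      distr \<pi> borel fst = \<mu> \<and> distr \<pi> borel snd = \<nu>}"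

definition OT_cost :: "('a::euclidean_space \<Rightarrow> 'a \<Rightarrow> real) \<Rightarrow> 'a measure \<Rightarrow> 'a measure \<Rightarrow> ennreal" where
  "OT_cost c \<mu> \<nu> = (INF \<pi> \<in> couplings \<mu> \<nu>. \<integral>\<^sup>+ p. ennreal (c (fst p) (snd p)) \<partial>\<pi>)"

definition empirical :: "nat \<Rightarrow> (nat \<Rightarrow> 'a::euclidean_space) \<Rightarrow> 'a measure" where
  "empirical n xs = measure_of UNIV (sets (borel :: 'a measure))
      (\<lambda>A. ennreal ((\<Sum>i<n. indicator A (xs i)) / real n))"

text \<open>|a - b| on [0,infinity]; equals infinity if exactly one of them is infinite.\<close>
definition ediff :: "ennreal \<Rightarrow> ennreal \<Rightarrow> ennreal" where
  "ediff a b = (a - b) + (b - a)"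

definition expected_OT_error ::
  "('a::euclidean_space \<Rightarrow> 'a \<Rightarrow> real) \<Rightarrow> nat \<Rightarrow> 'a measure \<Rightarrow> 'a measure \<Rightarrow> ennreal" where
  "expected_OT_error c n \<mu> \<nu> =
     (\<integral>\<^sup>+ \<omega>. ediff (OT_cost c (empirical n (fst \<omega>)) (empirical n (snd \<omega>))) (OT_cost c \<mu> \<nu>)
        \<partial>(PiM {..<n} (\<lambda>_. \<mu>) \<Otimes>\<^sub>M PiM {..<n} (\<lambda>_. \<nu>)))"

end

theory Submission
  imports Defs
begin

lemma finite_borel: "finite (S::'a::euclidean_space set) \<Longrightarrow> S \<in> sets borel"
  by (simp add: borel_closed finite_imp_closed)


lemma PiM_distr_pmf:
  fixes f :: "'b \<Rightarrow> 'a::euclidean_space"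
  assumes fin: "finite I"
  shows "PiM I (\<lambda>_. distr (measure_pmf p) borel f) =
     distr (measure_pmf (Pi_pmf I d (\<lambda>_. p))) (PiM I (\<lambda>_. borel)) (\<lambda>a. restrict (\<lambda>i. f (a i)) I)"
proof -
  interpret product_prob_space "\<lambda>_. distr (measure_pmf p) borel f"
    by (intro product_prob_spaceI prob_space.prob_space_distr measure_pmf.prob_space_axioms) simp
  have meas: "(\<lambda>a. restrict (\<lambda>i. f (a i)) I) \<in> measure_pmf (Pi_pmf I d (\<lambda>_. p)) \<rightarrow>\<^sub>M PiM I (\<lambda>_. borel)"
    by (auto simp: measurable_pmf_measure1 space_PiM)
  show ?thesis
  proof (rule PiM_eqI[symmetric])
    show "finite I" by fact
    show "sets (distr (measure_pmf (Pi_pmf I d (\<lambda>_. p))) (PiM I (\<lambda>_. borel)) (\<lambda>a. restrict (\<lambda>i. f (a i)) I))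
       = sets (PiM I (\<lambda>_. distr (measure_pmf p) borel f))"
      by (subst sets_distr, rule sets_PiM_cong) auto
    fix A assume A: "\<And>i. i \<in> I \<Longrightarrow> A i \<in> sets (distr (measure_pmf p) borel f)"
    have AB: "PiE I A \<in> sets (PiM I (\<lambda>_. borel))"
      using A by (intro sets_PiM_I_finite fin) auto
    have pre: "(\<lambda>a. restrict (\<lambda>i. f (a i)) I) -` PiE I A \<inter> space (measure_pmf (Pi_pmf I d (\<lambda>_. p)))
       = Pi I (\<lambda>i. f -` A i)"
      by (auto simp: PiE_def Pi_def)
    have "emeasure (distr (measure_pmf (Pi_pmf I d (\<lambda>_. p))) (PiM I (\<lambda>_. borel)) (\<lambda>a. restrict (\<lambda>i. f (a i)) I)) (PiE I A)
       = emeasure (measure_pmf (Pi_pmf I d (\<lambda>_. p))) (Pi I (\<lambda>i. f -` A i))"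
      using AB meas pre by (subst emeasure_distr) auto
    also have "\<dots> = ennreal (\<Prod>i\<in>I. measure_pmf.prob p (f -` A i))"
      by (simp add: measure_pmf.emeasure_eq_measure measure_Pi_pmf_Pi fin)
    also have "\<dots> = (\<Prod>i\<in>I. emeasure (distr (measure_pmf p) borel f) (A i))"
      using A by (subst prod_ennreal[symmetric]) (auto simp: emeasure_distr measure_pmf.emeasure_eq_measure intro!: prod.cong)
    finally show "emeasure (distr (measure_pmf (Pi_pmf I d (\<lambda>_. p))) (PiM I (\<lambda>_. borel)) (\<lambda>a. restrict (\<lambda>i. f (a i)) I)) (PiE I A)
       = (\<Prod>i\<in>I. emeasure (distr (measure_pmf p) borel f) (A i))" .
  qed
qed



lemma empirical_eq:
  fixes xs :: "nat \<Rightarrow> 'a::euclidean_space"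
  assumes n: "n \<ge> 1"
  shows "empirical n xs = distr (measure_pmf (pmf_of_set {..<n})) borel xs"
proof -
  let ?N = "distr (measure_pmf (pmf_of_set {..<n})) borel xs"
  have ne: "{..<n} \<noteq> {}" using n by (auto simp: lessThan_empty_iff)
  have "empirical n xs = measure_of UNIV (sets borel) (emeasure ?N)"
    unfolding empirical_def
  proof (rule measure_of_eq)
    show "sets (borel::'a measure) \<subseteq> Pow UNIV" by auto
    fix A assume "A \<in> sigma_sets UNIV (sets (borel::'a measure))"
    hence A: "A \<in> sets borel" by (metis sets.sigma_sets_eq space_borel)
    have "emeasure ?N A = emeasure (measure_pmf (pmf_of_set {..<n})) (xs -` A)"
      using A by (subst emeasure_distr) (auto simp: measurable_pmf_measure1)
    also have "\<dots> = ennreal (real (card ({..<n} \<inter> xs -` A)) / real n)"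
      using ne by (subst emeasure_pmf_of_set) auto
    also have "real (card ({..<n} \<inter> xs -` A)) = (\<Sum>i<n. indicator A (xs i))"
      by (simp add: sum_indicator_eq_card[symmetric] indicator_def Int_def)
    finally show "ennreal ((\<Sum>i<n. indicator A (xs i)) / real n) = emeasure ?N A" by simp
  qed
  also have "\<dots> = ?N"
    using measure_of_of_measure[of ?N] by simp
  finally show ?thesis .
qed

lemma ennreal_integral_le_nn_integral:
  fixes f :: "'b \<Rightarrow> real"
  assumes "integrable M f"
  shows "ennreal (integral\<^sup>L M f) \<le> (\<integral>\<^sup>+ x. ennreal (f x) \<partial>M)"
proof -
  have i: "integrable M (\<lambda>x. max 0 (f x))" using assms by auto
  have "integral\<^sup>L M f \<le> integral\<^sup>L M (\<lambda>x. max 0 (f x))"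
    using assms i by (intro integral_mono) auto
  hence "ennreal (integral\<^sup>L M f) \<le> ennreal (integral\<^sup>L M (\<lambda>x. max 0 (f x)))"
    by (rule ennreal_leI)
  also have "\<dots> = (\<integral>\<^sup>+ x. ennreal (max 0 (f x)) \<partial>M)"
    using i by (intro nn_integral_eq_integral[symmetric]) auto
  also have "\<dots> = (\<integral>\<^sup>+ x. ennreal (f x) \<partial>M)"
    by (intro nn_integral_cong) (auto simp: max_def ennreal_neg)
  finally show ?thesis .
qed

lemma emp_facts:
  fixes xs :: "nat \<Rightarrow> 'a::euclidean_space" and A :: "'a \<Rightarrow> real"
  assumes n: "n \<ge> 1" and A: "A \<in> borel_measurable borel"
  shows "integrable (empirical n xs) A"
    and "integral\<^sup>L (empirical n xs) A = (\<Sum>i<n. A (xs i)) / n"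
    and "AE x in empirical n xs. x \<in> xs ` {..<n}"
proof -
  have ne: "{..<n} \<noteq> {}" using n by (auto simp: lessThan_empty_iff)
  have m: "xs \<in> measure_pmf (pmf_of_set {..<n}) \<rightarrow>\<^sub>M borel" by (simp add: measurable_pmf_measure1)
  show "integrable (empirical n xs) A"
    unfolding empirical_eq[OF n] using m A ne
    by (subst integrable_distr_eq) (auto intro!: integrable_measure_pmf_finite simp: set_pmf_of_set[OF ne])
  show "integral\<^sup>L (empirical n xs) A = (\<Sum>i<n. A (xs i)) / n"
    unfolding empirical_eq[OF n] using m A ne
    by (subst integral_distr) (auto simp: integral_pmf_of_set)
  show "AE x in empirical n xs. x \<in> xs ` {..<n}"
    unfolding empirical_eq[OF n] using m ne
    by (subst AE_distr_iff) (auto intro!: AE_pmfI finite_borel simp: set_pmf_of_set[OF ne])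
qed

lemma OT_emp_lower:
  fixes xs ys :: "nat \<Rightarrow> 'a::euclidean_space" and A B :: "'a \<Rightarrow> real"
  assumes n: "n \<ge> 1" and A: "A \<in> borel_measurable borel" and B: "B \<in> borel_measurable borel"
   and le: "\<And>i j. i<n \<Longrightarrow> j<n \<Longrightarrow> A (xs i) + B (ys j) \<le> c (xs i) (ys j)"
  shows "ennreal ((\<Sum>i<n. A (xs i))/n + (\<Sum>j<n. B (ys j))/n) \<le> OT_cost c (empirical n xs) (empirical n ys)"
  unfolding OT_cost_def
proof (rule INF_greatest)
  fix \<pi> assume "\<pi> \<in> couplings (empirical n xs) (empirical n ys)"
  hence s\<pi>: "sets \<pi> = sets (borel :: ('a \<times> 'a) measure)" and ps: "prob_space \<pi>"
    and mx: "distr \<pi> borel fst = empirical n xs" and my: "distr \<pi> borel snd = empirical n ys"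
    unfolding couplings_def by auto
  have mf: "fst \<in> \<pi> \<rightarrow>\<^sub>M (borel::'a measure)"
    by (subst measurable_cong_sets[OF s\<pi> refl], rule borel_measurable_continuous_onI, intro continuous_intros)
  have ms: "snd \<in> \<pi> \<rightarrow>\<^sub>M (borel::'a measure)"
    by (subst measurable_cong_sets[OF s\<pi> refl], rule borel_measurable_continuous_onI, intro continuous_intros)
  have AEx: "AE z in \<pi>. fst z \<in> xs ` {..<n}"
  proof -
    have "AE x in distr \<pi> borel fst. x \<in> xs ` {..<n}" unfolding mx by (rule emp_facts(3)[OF n A])
    thus ?thesis using mf by (subst (asm) AE_distr_iff) (auto intro!: finite_borel)
  qed
  have AEy: "AE z in \<pi>. snd z \<in> ys ` {..<n}"
  proof -
    have "AE x in distr \<pi> borel snd. x \<in> ys ` {..<n}" unfolding my by (rule emp_facts(3)[OF n B])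
    thus ?thesis using ms by (subst (asm) AE_distr_iff) (auto intro!: finite_borel)
  qed
  have iA: "integrable \<pi> (\<lambda>z. A (fst z))"
    using emp_facts(1)[OF n A, of xs] mf A by (simp add: mx[symmetric] integrable_distr_eq)
  have iB: "integrable \<pi> (\<lambda>z. B (snd z))"
    using emp_facts(1)[OF n B, of ys] ms B by (simp add: my[symmetric] integrable_distr_eq)
  have IA: "integral\<^sup>L \<pi> (\<lambda>z. A (fst z)) = (\<Sum>i<n. A (xs i))/n"
    using emp_facts(2)[OF n A, of xs] mf A by (simp add: mx[symmetric] integral_distr)
  have IB: "integral\<^sup>L \<pi> (\<lambda>z. B (snd z)) = (\<Sum>i<n. B (ys i))/n"
    using emp_facts(2)[OF n B, of ys] ms B by (simp add: my[symmetric] integral_distr)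
  have "ennreal ((\<Sum>i<n. A (xs i))/n + (\<Sum>j<n. B (ys j))/n) = ennreal (integral\<^sup>L \<pi> (\<lambda>z. A (fst z) + B (snd z)))"
    using iA iB IA IB by simp
  also have "\<dots> \<le> (\<integral>\<^sup>+ z. ennreal (A (fst z) + B (snd z)) \<partial>\<pi>)"
    using iA iB by (intro ennreal_integral_le_nn_integral) auto
  also have "\<dots> \<le> (\<integral>\<^sup>+ z. ennreal (c (fst z) (snd z)) \<partial>\<pi>)"
  proof (rule nn_integral_mono_AE)
    show "AE z in \<pi>. ennreal (A (fst z) + B (snd z)) \<le> ennreal (c (fst z) (snd z))"
      using AEx AEy by eventually_elim (auto intro!: ennreal_leI le)
  qed
  finally show "ennreal ((\<Sum>i<n. A (xs i))/n + (\<Sum>j<n. B (ys j))/n) \<le> (\<integral>\<^sup>+ z. ennreal (c (fst z) (snd z)) \<partial>\<pi>)" .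
qed



lemma OT_upper:
  fixes h :: "'a::euclidean_space \<Rightarrow> real"
  assumes hc: "continuous_on UNIV h"
  shows "OT_cost (\<lambda>x y. h (x - y)) (distr (measure_pmf p) borel (\<lambda>v. x0 + v)) (distr (measure_pmf p) borel (\<lambda>v. y0 + v))
     \<le> ennreal (h (x0 - y0))"
proof -
  let ?\<pi> = "distr (measure_pmf p) (borel :: ('a \<times> 'a) measure) (\<lambda>v. (x0 + v, y0 + v))"
  have m: "(\<lambda>v. (x0 + v, y0 + v)) \<in> measure_pmf p \<rightarrow>\<^sub>M (borel :: ('a \<times> 'a) measure)"
    by (simp add: measurable_pmf_measure1)
  have mf: "fst \<in> (borel :: ('a \<times> 'a) measure) \<rightarrow>\<^sub>M (borel::'a measure)"
    by (rule borel_measurable_continuous_onI, intro continuous_intros)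
  have ms: "snd \<in> (borel :: ('a \<times> 'a) measure) \<rightarrow>\<^sub>M (borel::'a measure)"
    by (rule borel_measurable_continuous_onI, intro continuous_intros)
  have "?\<pi> \<in> couplings (distr (measure_pmf p) borel (\<lambda>v. x0 + v)) (distr (measure_pmf p) borel (\<lambda>v. y0 + v))"
    unfolding couplings_def
  proof (intro CollectI conjI)
    show "sets ?\<pi> = sets borel" by simp
    show "prob_space ?\<pi>" using m by (rule measure_pmf.prob_space_distr)
    show "distr ?\<pi> borel fst = distr (measure_pmf p) borel (\<lambda>v. x0 + v)"
      using m mf by (subst distr_distr) (auto simp: comp_def)
    show "distr ?\<pi> borel snd = distr (measure_pmf p) borel (\<lambda>v. y0 + v)"
      using m ms by (subst distr_distr) (auto simp: comp_def)
  qed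
  moreover have "(\<integral>\<^sup>+ z. ennreal (h (fst z - snd z)) \<partial>?\<pi>) = ennreal (h (x0 - y0))"
  proof -
    have hm: "(\<lambda>z. ennreal (h (fst z - snd z))) \<in> borel_measurable (borel :: ('a \<times> 'a) measure)"
      by (intro measurable_compose[OF _ measurable_ennreal] borel_measurable_continuous_onI
            continuous_on_compose2[OF hc] continuous_intros) auto
    have "(\<integral>\<^sup>+ z. ennreal (h (fst z - snd z)) \<partial>?\<pi>) = (\<integral>\<^sup>+ v. ennreal (h (x0 - y0)) \<partial>measure_pmf p)"
      using m hm by (subst nn_integral_distr) (auto simp: algebra_simps)
    also have "\<dots> = ennreal (h (x0 - y0))" by simp
    finally show ?thesis .
  qed
  ultimately show ?thesis unfolding OT_cost_def
    by (metis (no_types, lifting) INF_lower)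
qed



lemma grid:
  fixes r :: real and n :: nat
  assumes r: "r > 0" and n: "n \<ge> 1"
  shows "\<exists>(K::'a::euclidean_space set) s. s > 0 \<and> finite K \<and> K \<noteq> {} \<and> (\<forall>v\<in>K. norm v < r)
     \<and> (\<forall>v\<in>K. \<forall>w\<in>K. v \<noteq> w \<longrightarrow> s \<le> norm (v - w)) \<and> 2 * n \<le> card K
     \<and> r / (4 * DIM('a)) * real n powr (- 1 / DIM('a)) \<le> s"
proof -
  define d where "d = DIM('a)"
  have d1: "d \<ge> 1" unfolding d_def by (simp add: DIM_positive Suc_leI)
  define q where "q = real (2*n) powr (1 / d)"
  have q1: "q \<ge> 1" unfolding q_def using n d1 by (intro ge_one_powr_ge_zero) auto
  define m where "m = nat \<lceil>q\<rceil>"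
  have mq: "real m \<ge> q" unfolding m_def by linarith
  have mq2: "real m \<le> 2 * q" unfolding m_def using q1 by linarith
  have m1: "m \<ge> 1" using mq q1 by linarith
  define t where "t = r / (d * m)"
  have t: "t > 0" unfolding t_def using r d1 m1 by auto
  define g :: "('a \<Rightarrow> nat) \<Rightarrow> 'a" where "g = (\<lambda>k. \<Sum>b\<in>(Basis::'a set). scaleR (t * real (k b)) b)"
  define P where "P = PiE (Basis::'a set) (\<lambda>_. {..<m})"
  define K where "K = g ` P"
  have gb: "g k \<bullet> b = t * real (k b)" if "b \<in> Basis" for k and b :: 'a
    unfolding g_def using that by (simp add: inner_sum_left inner_Basis if_distrib cong: if_cong)
  have inj: "inj_on g P"
  proof (rule inj_onI)
    fix k k' assume k: "k \<in> P" and k': "k' \<in> P" and eq: "g k = g k'"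
    show "k = k'"
    proof (rule PiE_ext[OF k[unfolded P_def] k'[unfolded P_def]])
      fix b :: 'a assume b: "b \<in> Basis"
      have "t * real (k b) = t * real (k' b)" using gb[OF b, of k] gb[OF b, of k'] eq by metis
      thus "k b = k' b" using t by simp
    qed
  qed
  have finP: "finite P" unfolding P_def by (intro finite_PiE) auto
  have cardP: "card P = m ^ d" unfolding P_def d_def by (simp add: card_PiE)
  have cardK: "card K = m ^ d" unfolding K_def using card_image[OF inj] cardP by simp
  have "real (2*n) = q ^ d"
    unfolding q_def using d1 n by (simp add: powr_realpow[symmetric] powr_powr)
  also have "\<dots> \<le> real m ^ d" using q1 mq by (intro power_mono) auto
  finally have c2: "2 * n \<le> card K" unfolding cardK by (simp flip: of_nat_power)
  have normK: "norm v < r" if "v \<in> K" for v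
  proof -
    obtain k where k: "k \<in> P" and v: "v = g k" using \<open>v \<in> K\<close> unfolding K_def by auto
    have "norm v \<le> (\<Sum>b\<in>(Basis::'a set). norm (scaleR (t * real (k b)) b))"
      unfolding v g_def by (rule norm_sum)
    also have "\<dots> = (\<Sum>b\<in>(Basis::'a set). t * real (k b))"
      using t by (intro sum.cong) auto
    also have "\<dots> \<le> (\<Sum>b\<in>(Basis::'a set). t * (real m - 1))"
    proof (intro sum_mono mult_left_mono)
      fix b :: 'a assume "b \<in> Basis"
      hence "k b < m" using k unfolding P_def by auto
      thus "real (k b) \<le> real m - 1" by linarith
    qed (use t in auto)
    also have "\<dots> = d * t * (real m - 1)" unfolding d_def by simp
    also have "\<dots> < d * t * real m" using d1 t by simp
    also have "\<dots> = r" unfolding t_def using d1 m1 by simp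
    finally show ?thesis .
  qed
  have sep: "t \<le> norm (v - w)" if "v \<in> K" "w \<in> K" "v \<noteq> w" for v w
  proof -
    obtain k where k: "k \<in> P" and v: "v = g k" using \<open>v \<in> K\<close> unfolding K_def by auto
    obtain k' where k': "k' \<in> P" and w: "w = g k'" using \<open>w \<in> K\<close> unfolding K_def by auto
    have "k \<noteq> k'" using that v w by auto
    then obtain b where b: "b \<in> Basis" and kb: "k b \<noteq> k' b"
      using k k' unfolding P_def by (meson PiE_ext)
    have "t \<le> t * \<bar>real (k b) - real (k' b)\<bar>" using kb t by (simp add: mult_le_cancel_left1)
    also have "\<dots> = \<bar>(v - w) \<bullet> b\<bar>" using b t
      by (simp add: v w inner_diff_left gb abs_mult flip: right_diff_distrib)
    also have "\<dots> \<le> norm (v - w)" using b by (rule Basis_le_norm)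
    finally show ?thesis .
  qed
  have "q = 2 powr (1/d) * real n powr (1/d)"
    unfolding q_def by (simp add: powr_mult)
  also have "\<dots> \<le> 2 * real n powr (1/d)"
  proof (rule mult_right_mono)
    show "2 powr (1/d) \<le> (2::real)"
      proof -
      have "2 powr (1/d) \<le> 2 powr (1::real)" using d1 by (intro powr_mono) auto
      thus ?thesis by simp
    qed
  qed simp
  finally have q2: "q \<le> 2 * real n powr (1/d)" .
  have npos: "real n powr (1/d) > 0" using n by simp
  have "r / (4 * d) * real n powr (- 1 / d) = r / (4 * d * real n powr (1/d))"
    using n by (simp add: powr_minus_divide divide_simps)
  also have "\<dots> \<le> r / (d * m)"
    using r d1 m1 mq2 q2 npos by (intro divide_left_mono) (auto intro!: mult_pos_pos)
  finally have "r / (4 * d) * real n powr (- 1 / d) \<le> t" unfolding t_def .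
  moreover have "K \<noteq> {}" using c2 n by auto
  ultimately show ?thesis
    using t finP c2 normK sep unfolding d_def K_def by (intro exI[of _ K] exI[of _ t]) (auto simp: K_def)
qed



lemma pred_eq_euclid[measurable (raw)]:
  fixes f g :: "'b \<Rightarrow> 'a::euclidean_space"
  assumes [measurable]: "f \<in> borel_measurable M" "g \<in> borel_measurable M"
  shows "Measurable.pred M (\<lambda>x. f x = g x)"
proof -
  have [measurable]: "{0::'a} \<in> sets borel" by (simp add: borel_closed)
  have "Measurable.pred M (\<lambda>x. f x - g x \<in> {0})" by measurable
  thus ?thesis by simp
qed

lemma pred_mem_euclid:
  fixes f :: "'b \<Rightarrow> 'a::euclidean_space"
  assumes [measurable]: "f \<in> borel_measurable M" "S \<in> sets borel"
  shows "Measurable.pred M (\<lambda>x. f x \<in> S)"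
  by measurable

lemma comp_meas:
  fixes n :: nat
  assumes "i < n"
  shows "(\<lambda>x. fst x i) \<in> borel_measurable (PiM {..<n} (\<lambda>_. borel) \<Otimes>\<^sub>M PiM {..<n} (\<lambda>_. (borel::'a::euclidean_space measure)))"
    and "(\<lambda>x. snd x i) \<in> borel_measurable (PiM {..<n} (\<lambda>_. borel) \<Otimes>\<^sub>M PiM {..<n} (\<lambda>_. (borel::'a::euclidean_space measure)))"
  using assms
  by (auto intro!: measurable_compose[OF measurable_fst measurable_component_singleton]
     measurable_compose[OF measurable_snd measurable_component_singleton])


lemma R_meas:
  fixes n :: nat and L :: "'a::euclidean_space \<Rightarrow> real" and za xa ya :: 'a and S T :: "'a set"
  assumes "bounded_linear L" "finite S" "finite T"
  shows "(\<lambda>\<omega>. ennreal ((\<Sum>i<n. L (fst \<omega> i - xa))/n - (\<Sum>i<n. L (snd \<omega> i - ya))/n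
     + c * (\<Sum>i<n. if (\<exists>j\<in>{..<n}. fst \<omega> i = snd \<omega> j + za) then 0 else 1)))
     \<in> borel_measurable (PiM {..<n} (\<lambda>_. borel) \<Otimes>\<^sub>M PiM {..<n} (\<lambda>_. (borel::'a measure)))"
proof -
  have l: "L \<in> borel_measurable borel"
    using assms(1) by (intro borel_measurable_continuous_onI linear_continuous_on)
  show ?thesis using l
    by (intro measurable_compose[OF _ measurable_ennreal] borel_measurable_add borel_measurable_diff
        borel_measurable_divide borel_measurable_const borel_measurable_sum borel_measurable_times
        measurable_If predE pred_intros_finite pred_eq_euclid comp_meas
        measurable_compose[OF comp_meas(1) l] measurable_compose[OF comp_meas(2) l]
        borel_measurable_add[OF comp_meas(2)] borel_measurable_diff[OF comp_meas(1)] borel_measurable_diff[OF comp_meas(2)]) auto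
qed

lemma good_meas:
  fixes n :: nat and S T :: "'a::euclidean_space set"
  assumes "finite S" "finite T"
  shows "Measurable.pred (PiM {..<n} (\<lambda>_. borel) \<Otimes>\<^sub>M PiM {..<n} (\<lambda>_. (borel::'a measure))) (\<lambda>\<omega>. \<forall>i\<in>{..<n}. fst \<omega> i \<in> S \<and> snd \<omega> i \<in> T)"
proof -
  have [measurable]: "S \<in> sets borel" "T \<in> sets borel" using assms by (auto intro: finite_borel)
  show ?thesis by (intro pred_intros_finite pred_intros_logic pred_mem_euclid comp_meas) auto
qed

lemma key:
  fixes K :: "'a::euclidean_space set" and h L :: "'a \<Rightarrow> real" and x0 y0 :: 'a and n :: nat
  assumes fin: "finite K" and ne: "K \<noteq> {}" and cK: "2 * n \<le> card K" and n: "n \<ge> 1"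
    and lin: "bounded_linear L" and hc: "continuous_on UNIV h" and h0: "0 \<le> h (x0 - y0)"
    and lam: "0 \<le> lam" and s: "0 < s" and alpha: "0 < \<alpha>"
    and sep: "\<And>v w. v \<in> K \<Longrightarrow> w \<in> K \<Longrightarrow> v \<noteq> w \<Longrightarrow> s \<le> norm (v - w)"
    and ineq: "\<And>v w. v \<in> K \<Longrightarrow> w \<in> K \<Longrightarrow>
        h (x0 - y0) + L (v - w) + lam * norm (v - w) powr \<alpha> \<le> h ((x0 + v) - (y0 + w))"
  shows "ennreal (lam * s powr \<alpha> / 2) \<le> expected_OT_error (\<lambda>x y. h (x - y)) n
      (distr (measure_pmf (pmf_of_set K)) borel (\<lambda>v. x0 + v))
      (distr (measure_pmf (pmf_of_set K)) borel (\<lambda>v. y0 + v))"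
proof -
  define p where "p = pmf_of_set K"
  define \<mu> where "\<mu> = distr (measure_pmf p) borel (\<lambda>v. x0 + v)"
  define \<nu> where "\<nu> = distr (measure_pmf p) borel (\<lambda>v. y0 + v)"
  define z0 where "z0 = x0 - y0"
  define c where "c = s powr \<alpha>"
  define P where "P = Pi_pmf {..<n} 0 (\<lambda>_. p)"
  define F where "F = (\<lambda>a::nat \<Rightarrow> 'a. restrict (\<lambda>i. x0 + a i) {..<n})"
  define G where "G = (\<lambda>a::nat \<Rightarrow> 'a. restrict (\<lambda>i. y0 + a i) {..<n})"
  define M where "M = PiM {..<n} (\<lambda>_. (borel::'a measure)) \<Otimes>\<^sub>M PiM {..<n} (\<lambda>_. (borel::'a measure))"
  define good where "good = (\<lambda>\<omega>::(nat\<Rightarrow>'a)\<times>(nat\<Rightarrow>'a). \<forall>i\<in>{..<n}. fst \<omega> i \<in> (\<lambda>v. x0 + v) ` K \<and> snd \<omega> i \<in> (\<lambda>v. y0 + v) ` K)"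
  define R where "R = (\<lambda>\<omega>::(nat\<Rightarrow>'a)\<times>(nat\<Rightarrow>'a). (\<Sum>i<n. L (fst \<omega> i - x0))/n - (\<Sum>i<n. L (snd \<omega> i - y0))/n
     + lam * c / n * (\<Sum>i<n. if (\<exists>j\<in>{..<n}. fst \<omega> i = snd \<omega> j + z0) then 0 else 1))"
  define R1 where "R1 = (\<lambda>a::nat \<Rightarrow> 'a. (\<Sum>i<n. L (a i)) / n)"
  define E where "E = (\<lambda>(q::(nat\<Rightarrow>'a)\<times>(nat\<Rightarrow>'a)) i j. if fst q i = snd q j then 1 else (0::real))"
  define R2 where "R2 = (\<lambda>q. R1 (fst q) - R1 (snd q) + lam * c / n * (n - (\<Sum>i<n. \<Sum>j<n. E q i j)))"
  have nz: "real n > 0" using n by simp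
  have c0: "c \<ge> 0" unfolding c_def by simp
  have setp: "set_pmf p = K" unfolding p_def using fin ne by simp
  have setP: "set_pmf P = PiE_dflt {..<n} 0 (\<lambda>_. K)"
    unfolding P_def by (simp add: set_Pi_pmf setp comp_def)
  have finP: "finite (set_pmf P)" unfolding setP using fin by (intro finite_PiE_dflt) auto
  have intQ: "integrable (measure_pmf (pair_pmf P P)) f" for f :: "_ \<Rightarrow> real"
    using finP by (intro integrable_measure_pmf_finite) simp
  have Rm: "(\<lambda>\<omega>. ennreal (R \<omega>)) \<in> borel_measurable M"
    unfolding R_def M_def using R_meas[OF lin finite.emptyI finite.emptyI, where n=n and xa=x0 and ya=y0 and c="lam*c/n" and za=z0]
    by (simp add: mult.assoc)
  have mF: "F \<in> measure_pmf P \<rightarrow>\<^sub>M PiM {..<n} (\<lambda>_. borel)"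
    by (simp add: measurable_pmf_measure1 F_def space_PiM)
  have mG: "G \<in> measure_pmf P \<rightarrow>\<^sub>M PiM {..<n} (\<lambda>_. borel)"
    by (simp add: measurable_pmf_measure1 G_def space_PiM)
  have mFG: "(\<lambda>(a, b). (F a, G b)) \<in> (measure_pmf P \<Otimes>\<^sub>M measure_pmf P) \<rightarrow>\<^sub>M M"
    unfolding M_def split_beta'
    by (intro measurable_Pair measurable_compose[OF measurable_fst mF] measurable_compose[OF measurable_snd mG])
  have Omega: "PiM {..<n} (\<lambda>_. \<mu>) \<Otimes>\<^sub>M PiM {..<n} (\<lambda>_. \<nu>) =
      distr (measure_pmf P \<Otimes>\<^sub>M measure_pmf P) M (\<lambda>(a,b). (F a, G b))"
  proof -
    have "PiM {..<n} (\<lambda>_. \<mu>) = distr (measure_pmf P) (PiM {..<n} (\<lambda>_. borel)) F"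
      unfolding \<mu>_def P_def F_def by (rule PiM_distr_pmf) simp
    moreover have "PiM {..<n} (\<lambda>_. \<nu>) = distr (measure_pmf P) (PiM {..<n} (\<lambda>_. borel)) G"
      unfolding \<nu>_def P_def G_def by (rule PiM_distr_pmf) simp
    moreover have "sigma_finite_measure (distr (measure_pmf P) (PiM {..<n} (\<lambda>_. (borel::'a measure))) G)"
      using mG by (intro prob_space_imp_sigma_finite measure_pmf.prob_space_distr)
    ultimately show ?thesis unfolding M_def using mF mG by (simp add: pair_measure_distr)
  qed
  have pw: "ennreal (R \<omega>) \<le> ediff (OT_cost (\<lambda>x y. h (x - y)) (empirical n (fst \<omega>)) (empirical n (snd \<omega>)))
      (OT_cost (\<lambda>x y. h (x - y)) \<mu> \<nu>)" if gd: "good \<omega>" for \<omega>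
  proof -
    define xs where "xs = fst \<omega>"
    define ys where "ys = snd \<omega>"
    define D where "D = (\<lambda>j. ys j + z0) ` {..<n}"
    define A where "A = (\<lambda>x. h z0 + L (x - x0) + lam * c * (if x \<in> D then 0 else 1))"
    define B where "B = (\<lambda>y. - L (y - y0))"
    have Dm[measurable]: "D \<in> sets borel" unfolding D_def by (intro finite_borel) auto
    have Lm[measurable]: "L \<in> borel_measurable borel"
      using lin by (intro borel_measurable_continuous_onI linear_continuous_on)
    have Am: "A \<in> borel_measurable borel" unfolding A_def by measurable
    have Bm: "B \<in> borel_measurable borel" unfolding B_def by measurable
    have le: "A (xs i) + B (ys j) \<le> h (xs i - ys j)" if ij: "i < n" "j < n" for i j
    proof -
      obtain v where v: "v \<in> K" "xs i = x0 + v" using gd ij unfolding good_def xs_def by auto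
      obtain w where w: "w \<in> K" "ys j = y0 + w" using gd ij unfolding good_def ys_def by auto
      have t: "lam * c * (if xs i \<in> D then 0 else 1) \<le> lam * norm (v - w) powr \<alpha>"
      proof (cases "v = w")
        case True
        hence "xs i \<in> D" unfolding D_def using v w ij by (auto simp: z0_def algebra_simps intro!: image_eqI[of _ _ j])
        thus ?thesis using lam by simp
      next
        case False
        hence "c \<le> norm (v - w) powr \<alpha>" unfolding c_def using sep[OF v(1) w(1)] s alpha
          by (intro powr_mono2) auto
        thus ?thesis using lam c0 by (auto intro: mult_left_mono order_trans[OF _ mult_left_mono])
      qed
      have "L (xs i - x0) + - L (ys j - y0) = L (v - w)"
        using v w by (simp add: linear_diff[OF bounded_linear.linear[OF lin]])
      thus ?thesis unfolding A_def B_def using ineq[OF v(1) w(1)] t v w by (simp add: z0_def)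
    qed
    have OTn: "ennreal ((\<Sum>i<n. A (xs i))/n + (\<Sum>j<n. B (ys j))/n)
        \<le> OT_cost (\<lambda>x y. h (x - y)) (empirical n xs) (empirical n ys)"
      by (rule OT_emp_lower[where c="\<lambda>x y. h (x - y)", OF n Am Bm le])
    have sA: "(\<Sum>i<n. A (xs i)) = n * h z0 + (\<Sum>i<n. L (xs i - x0))
        + lam * c * (\<Sum>i<n. if \<exists>j\<in>{..<n}. xs i = ys j + z0 then 0 else 1)"
      unfolding A_def D_def by (simp add: sum.distrib sum_distrib_left image_iff)
    have sB: "(\<Sum>j<n. B (ys j)) = - (\<Sum>i<n. L (ys i - y0))"
      unfolding B_def by (simp add: sum_negf)
    have eqR: "(\<Sum>i<n. A (xs i))/n + (\<Sum>j<n. B (ys j))/n = h z0 + R \<omega>"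
      unfolding sA sB unfolding R_def xs_def ys_def using nz by (simp add: field_simps)
    have OTu: "OT_cost (\<lambda>x y. h (x - y)) \<mu> \<nu> \<le> ennreal (h z0)"
      unfolding \<mu>_def \<nu>_def z0_def by (rule OT_upper[OF hc])
    have "ennreal (R \<omega>) = ennreal (h z0 + R \<omega>) - ennreal (h z0)"
      using h0 by (simp add: ennreal_minus z0_def)
    also have "\<dots> \<le> OT_cost (\<lambda>x y. h (x - y)) (empirical n xs) (empirical n ys) - OT_cost (\<lambda>x y. h (x - y)) \<mu> \<nu>"
      using OTn OTu unfolding eqR by (intro ennreal_minus_mono) auto
    also have "\<dots> \<le> ediff (OT_cost (\<lambda>x y. h (x - y)) (empirical n xs) (empirical n ys)) (OT_cost (\<lambda>x y. h (x - y)) \<mu> \<nu>)"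
      unfolding ediff_def by simp
    finally show ?thesis unfolding xs_def ys_def .
  qed
  have AEgood: "AE \<omega> in PiM {..<n} (\<lambda>_. \<mu>) \<Otimes>\<^sub>M PiM {..<n} (\<lambda>_. \<nu>). good \<omega>"
  proof -
    have gp: "Measurable.pred M good"
      unfolding M_def good_def using fin by (intro good_meas) auto
    have gp2: "Measurable.pred (measure_pmf P \<Otimes>\<^sub>M measure_pmf P) (\<lambda>q. good (F (fst q), G (snd q)))"
      using measurable_compose[OF mFG gp] by (simp add: split_beta')
    have "AE q in measure_pmf P \<Otimes>\<^sub>M measure_pmf P. good (F (fst q), G (snd q))"
    proof (rule pair_sigma_finite.AE_pair_measure)
      show "pair_sigma_finite (measure_pmf P) (measure_pmf P)"
        by (intro pair_sigma_finite.intro prob_space_imp_sigma_finite measure_pmf.prob_space_axioms)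
      show "{x \<in> space (measure_pmf P \<Otimes>\<^sub>M measure_pmf P). good (F (fst x), G (snd x))}
          \<in> sets (measure_pmf P \<Otimes>\<^sub>M measure_pmf P)" using gp2 by (rule predE)
      show "AE x in measure_pmf P. AE y in measure_pmf P. good (F (fst (x, y)), G (snd (x, y)))"
      proof (intro AE_pmfI)
        fix x y assume x: "x \<in> set_pmf P" and y: "y \<in> set_pmf P"
        show "good (F (fst (x, y)), G (snd (x, y)))"
          using x y unfolding setP PiE_dflt_def good_def F_def G_def by auto
      qed
    qed
    thus ?thesis unfolding Omega using mFG predE[OF gp]
      by (subst AE_distr_iff) (auto simp: split_beta')
  qed
  have RR2: "R2 q \<le> R (F (fst q), G (snd q))" for q
  proof -
    obtain a b where q: "q = (a, b)" by (cases q)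
    have e1: "(\<Sum>i<n. L (F a i - x0)) = (\<Sum>i<n. L (a i))"
      by (intro sum.cong) (auto simp: F_def)
    have e2: "(\<Sum>i<n. L (G b i - y0)) = (\<Sum>i<n. L (b i))"
      by (intro sum.cong) (auto simp: G_def)
    have e3: "1 - (\<Sum>j<n. E q i j) \<le> (if \<exists>j\<in>{..<n}. F a i = G b j + z0 then 0 else 1)" if i: "i < n" for i
    proof (cases "\<exists>j\<in>{..<n}. a i = b j")
      case True
      then obtain j where j: "j < n" "a i = b j" by auto
      have "1 \<le> (\<Sum>j<n. E q i j)"
        using j by (intro member_le_sum[of j, THEN order_trans[rotated]]) (auto simp: E_def q)
      moreover have "\<exists>j\<in>{..<n}. F a i = G b j + z0"
        using j i by (auto simp: F_def G_def z0_def algebra_simps)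
      ultimately show ?thesis by simp
    next
      case False
      hence "(\<Sum>j<n. E q i j) = 0" by (auto simp: E_def q)
      moreover have "\<not> (\<exists>j\<in>{..<n}. F a i = G b j + z0)"
        using False i by (auto simp: F_def G_def z0_def algebra_simps)
      ultimately show ?thesis by simp
    qed
    have "real n - (\<Sum>i<n. \<Sum>j<n. E q i j) = (\<Sum>i<n. 1 - (\<Sum>j<n. E q i j))"
      by (simp add: sum_subtractf)
    also have "\<dots> \<le> (\<Sum>i<n. if \<exists>j\<in>{..<n}. F a i = G b j + z0 then 0 else 1)"
      by (intro sum_mono e3) auto
    finally have e4: "lam * c / n * (real n - (\<Sum>i<n. \<Sum>j<n. E q i j))
       \<le> lam * c / n * (\<Sum>i<n. if \<exists>j\<in>{..<n}. F a i = G b j + z0 then 0 else 1)"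
      using lam c0 nz by (intro mult_left_mono) auto
    show ?thesis unfolding R2_def R_def R1_def using e4 by (simp add: q e1 e2)
  qed
  have IE: "measure_pmf.expectation (pair_pmf P P) (\<lambda>q. E q i j) \<le> 1 / card K" if ij: "i < n" "j < n" for i j
  proof -
    have mp: "map_pmf (\<lambda>b. b j) P = p" unfolding P_def using ij by (subst Pi_pmf_component) auto
    have inner: "(\<integral>\<^sup>+ b. ennreal (E (a, b) i j) \<partial>measure_pmf P) \<le> ennreal (1 / real (card K))" for a
    proof -
      have "(\<integral>\<^sup>+ b. ennreal (E (a, b) i j) \<partial>measure_pmf P) = (\<integral>\<^sup>+ b. indicator ((\<lambda>b. b j) -` {a i}) b \<partial>measure_pmf P)"
        by (intro nn_integral_cong) (auto simp: E_def indicator_def)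
      also have "\<dots> = emeasure (measure_pmf P) ((\<lambda>b. b j) -` {a i})" by simp
      also have "\<dots> = emeasure (measure_pmf (map_pmf (\<lambda>b. b j) P)) {a i}" by simp
      also have "\<dots> = ennreal (pmf p (a i))" unfolding mp by (rule emeasure_pmf_single)
      also have "\<dots> \<le> ennreal (1 / real (card K))"
        unfolding p_def using fin ne by (intro ennreal_leI) (auto simp: indicator_def)
      finally show ?thesis .
    qed
    have "ennreal (measure_pmf.expectation (pair_pmf P P) (\<lambda>q. E q i j)) = (\<integral>\<^sup>+ q. ennreal (E q i j) \<partial>pair_pmf P P)"
      by (intro nn_integral_eq_integral[symmetric] intQ) (auto simp: E_def)
    also have "\<dots> = (\<integral>\<^sup>+ a. \<integral>\<^sup>+ b. ennreal (E (a, b) i j) \<partial>P \<partial>P)"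
      by (subst nn_integral_pair_pmf') simp
    also have "\<dots> \<le> (\<integral>\<^sup>+ a. ennreal (1 / real (card K)) \<partial>P)"
      by (intro nn_integral_mono inner)
    also have "\<dots> = ennreal (1 / real (card K))" by simp
    finally show ?thesis by (subst (asm) ennreal_le_iff) auto
  qed
  have IR2: "measure_pmf.expectation (pair_pmf P P) R2 \<ge> lam * c / 2"
  proof -
    let ?Q = "measure_pmf (pair_pmf P P)"
    have "measure_pmf.expectation (pair_pmf P P) R2 =
        integral\<^sup>L ?Q (\<lambda>q. R1 (fst q)) - integral\<^sup>L ?Q (\<lambda>q. R1 (snd q))
        + lam * c / n * (n - (\<Sum>i<n. \<Sum>j<n. integral\<^sup>L ?Q (\<lambda>q. E q i j)))"
      unfolding R2_def by (simp add: intQ integral_sum)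
    also have "integral\<^sup>L ?Q (\<lambda>q. R1 (fst q)) = integral\<^sup>L ?Q (\<lambda>q. R1 (snd q))" by simp
    finally have eq: "measure_pmf.expectation (pair_pmf P P) R2 =
        lam * c / n * (n - (\<Sum>i<n. \<Sum>j<n. integral\<^sup>L ?Q (\<lambda>q. E q i j)))" by simp
    have "(\<Sum>i<n. \<Sum>j<n. integral\<^sup>L ?Q (\<lambda>q. E q i j)) \<le> (\<Sum>i<n. \<Sum>j<n. 1 / real (card K))"
      by (intro sum_mono IE) auto
    also have "\<dots> = real n * real n / real (card K)" by simp
    also have "\<dots> \<le> real n / 2"
    proof -
      have ck: "real (card K) \<ge> 2 * real n" using cK by linarith
      hence "real n * real n \<le> real n / 2 * real (card K)" using nz by (simp add: mult_left_mono)
      thus ?thesis using ck nz by (simp add: divide_le_eq)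
    qed
    finally have "real n / 2 \<le> real n - (\<Sum>i<n. \<Sum>j<n. integral\<^sup>L ?Q (\<lambda>q. E q i j))" by simp
    hence "lam * c / n * (real n / 2) \<le> lam * c / n * (n - (\<Sum>i<n. \<Sum>j<n. integral\<^sup>L ?Q (\<lambda>q. E q i j)))"
      using lam c0 nz by (intro mult_left_mono) auto
    moreover have "lam * c / n * (real n / 2) = lam * c / 2" using nz by simp
    ultimately show ?thesis using eq by simp
  qed
  have "ennreal (lam * s powr \<alpha> / 2) \<le> ennreal (measure_pmf.expectation (pair_pmf P P) R2)"
    using IR2 unfolding c_def by (rule ennreal_leI)
  also have "\<dots> \<le> (\<integral>\<^sup>+ q. ennreal (R2 q) \<partial>pair_pmf P P)"
    by (rule ennreal_integral_le_nn_integral[OF intQ])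
  also have "\<dots> \<le> (\<integral>\<^sup>+ q. ennreal (R (F (fst q), G (snd q))) \<partial>pair_pmf P P)"
    by (intro nn_integral_mono ennreal_leI RR2)
  also have "\<dots> = (\<integral>\<^sup>+ a. \<integral>\<^sup>+ b. ennreal (R (F a, G b)) \<partial>P \<partial>P)"
    by (subst nn_integral_pair_pmf') simp
  also have "\<dots> = (\<integral>\<^sup>+ q. ennreal (R (F (fst q), G (snd q))) \<partial>(measure_pmf P \<Otimes>\<^sub>M measure_pmf P))"
  proof -
    have "(\<lambda>q. ennreal (R (F (fst q), G (snd q)))) \<in> borel_measurable (measure_pmf P \<Otimes>\<^sub>M measure_pmf P)"
      using measurable_compose[OF mFG Rm] by (simp add: split_beta')
    from measure_pmf.nn_integral_fst[OF this] show ?thesis by simp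
  qed
  also have "\<dots> = (\<integral>\<^sup>+ \<omega>. ennreal (R \<omega>) \<partial>(PiM {..<n} (\<lambda>_. \<mu>) \<Otimes>\<^sub>M PiM {..<n} (\<lambda>_. \<nu>)))"
    unfolding Omega using mFG Rm by (subst nn_integral_distr) (auto simp: split_beta')
  also have "\<dots> \<le> expected_OT_error (\<lambda>x y. h (x - y)) n \<mu> \<nu>"
    unfolding expected_OT_error_def
    using AEgood by (intro nn_integral_mono_AE) (auto elim!: eventually_mono intro: pw)
  finally show ?thesis unfolding \<mu>_def \<nu>_def p_def .
qed



theorem mainTheorem15:
  fixes X Y :: "'a::euclidean_space set" and x0 y0 :: 'a and \<alpha> :: real
  assumes dim: "DIM('a) \<ge> 5"
    and convX: "convex X" and convY: "convex Y"
    and intX: "interior X \<noteq> {}" and intY: "interior Y \<noteq> {}"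
    and x0: "x0 \<in> interior X" and y0: "y0 \<in> interior Y"
    and alpha: "0 < \<alpha>" "\<alpha> \<le> 2"
  shows "\<exists>C>0. \<forall>(h :: 'a \<Rightarrow> real) (lam :: real).
      ((\<forall>z. 0 \<le> h z) \<and> convex_on UNIV h \<and> (\<forall>z. h (- z) = h z) \<and> lsc h
       \<and> (\<forall>z \<in> {x - y | x y. x \<in> X \<and> y \<in> Y}. h differentiable (at z))
       \<and> lam > 0
       \<and> (\<forall>z \<in> {x - y | x y. x \<in> X \<and> y \<in> Y}.
             (if \<alpha> \<le> 1 then h z - h (x0 - y0) \<ge> lam * norm (z - (x0 - y0)) powr \<alpha>
              else h z - h (x0 - y0) \<ge> frechet_derivative h (at (x0 - y0)) (z - (x0 - y0))
                                       + lam * norm (z - (x0 - y0)) powr \<alpha>)))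
      \<longrightarrow> (\<forall>n::nat. n \<ge> 1 \<longrightarrow>
            (SUP \<mu> \<in> prob_measures X. SUP \<nu> \<in> prob_measures Y.
               expected_OT_error (\<lambda>x y. h (x - y)) n \<mu> \<nu>)
            \<ge> ennreal (C * lam * real n powr (- \<alpha> / real DIM('a))))"
proof -
  obtain r1 where r1': "r1 > 0" "ball x0 r1 \<subseteq> interior X"
    using x0 open_contains_ball_eq[OF open_interior, of x0 X] by auto
  have r1: "r1 > 0" "ball x0 r1 \<subseteq> X" using r1' interior_subset[of X] by auto
  obtain r2 where r2': "r2 > 0" "ball y0 r2 \<subseteq> interior Y"
    using y0 open_contains_ball_eq[OF open_interior, of y0 Y] by auto
  have r2: "r2 > 0" "ball y0 r2 \<subseteq> Y" using r2' interior_subset[of Y] by auto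
  define r where "r = min r1 r2"
  have r: "r > 0" using r1 r2 unfolding r_def by auto
  have rX: "ball x0 r \<subseteq> X" using r1 unfolding r_def by auto
  have rY: "ball y0 r \<subseteq> Y" using r2 unfolding r_def by auto
  define d where "d = real DIM('a)"
  have d1: "d \<ge> 1" unfolding d_def by (simp add: DIM_positive Suc_leI)
  define C where "C = (r / (4 * d)) powr \<alpha> / 2"
  have C: "C > 0" unfolding C_def using r d1 by simp
  show ?thesis
  proof (intro exI[of _ C] conjI allI impI)
    show "C > 0" by fact
    fix h :: "'a \<Rightarrow> real" and lam :: real and n :: nat
    assume H: "(\<forall>z. 0 \<le> h z) \<and> convex_on UNIV h \<and> (\<forall>z. h (- z) = h z) \<and> lsc h
       \<and> (\<forall>z \<in> {x - y | x y. x \<in> X \<and> y \<in> Y}. h differentiable (at z))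
       \<and> lam > 0
       \<and> (\<forall>z \<in> {x - y | x y. x \<in> X \<and> y \<in> Y}.
             (if \<alpha> \<le> 1 then h z - h (x0 - y0) \<ge> lam * norm (z - (x0 - y0)) powr \<alpha>
              else h z - h (x0 - y0) \<ge> frechet_derivative h (at (x0 - y0)) (z - (x0 - y0))
                                       + lam * norm (z - (x0 - y0)) powr \<alpha>))"
      and n: "n \<ge> 1"
    from H have hpos: "\<And>z. 0 \<le> h z" and hconv: "convex_on UNIV h"
      and hdiff: "\<And>z. z \<in> {x - y | x y. x \<in> X \<and> y \<in> Y} \<Longrightarrow> h differentiable (at z)"
      and lam: "lam > 0"
      and hineq: "\<And>z. z \<in> {x - y | x y. x \<in> X \<and> y \<in> Y} \<Longrightarrow>
             (if \<alpha> \<le> 1 then h z - h (x0 - y0) \<ge> lam * norm (z - (x0 - y0)) powr \<alpha>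
              else h z - h (x0 - y0) \<ge> frechet_derivative h (at (x0 - y0)) (z - (x0 - y0))
                                       + lam * norm (z - (x0 - y0)) powr \<alpha>)"
      by blast+
    obtain K :: "'a set" and s where Ks: "s > 0" "finite K" "K \<noteq> {}" "\<forall>v\<in>K. norm v < r"
       "\<forall>v\<in>K. \<forall>w\<in>K. v \<noteq> w \<longrightarrow> s \<le> norm (v - w)" "2 * n \<le> card K"
       "r / (4 * DIM('a)) * real n powr (- 1 / DIM('a)) \<le> s"
      using grid[OF r n] by blast
    define L where "L = (if \<alpha> \<le> 1 then (\<lambda>_. 0) else frechet_derivative h (at (x0 - y0)))"
    have x0X: "x0 \<in> X" and y0Y: "y0 \<in> Y" using x0 y0 interior_subset by auto
    have z0Z: "x0 - y0 \<in> {x - y | x y. x \<in> X \<and> y \<in> Y}" using x0X y0Y by blast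
    have lin: "bounded_linear L"
    proof (cases "\<alpha> \<le> 1")
      case True thus ?thesis unfolding L_def by (simp add: bounded_linear_zero)
    next
      case False
      have "(h has_derivative frechet_derivative h (at (x0 - y0))) (at (x0 - y0))"
        using hdiff[OF z0Z] by (rule frechet_derivative_works[THEN iffD1])
      thus ?thesis unfolding L_def using False by (simp add: has_derivative_bounded_linear)
    qed
    have hc: "continuous_on UNIV h" by (rule convex_on_continuous[OF open_UNIV hconv])
    have ineq: "h (x0 - y0) + L (v - w) + lam * norm (v - w) powr \<alpha> \<le> h ((x0 + v) - (y0 + w))"
      if v: "v \<in> K" and w: "w \<in> K" for v w
    proof -
      have "x0 + v \<in> X" using rX Ks(4) v by (auto simp: dist_norm)
      moreover have "y0 + w \<in> Y" using rY Ks(4) w by (auto simp: dist_norm)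
      ultimately have zZ: "(x0 + v) - (y0 + w) \<in> {x - y | x y. x \<in> X \<and> y \<in> Y}" by blast
      have e: "(x0 + v) - (y0 + w) - (x0 - y0) = v - w" by (simp add: algebra_simps)
      show ?thesis using hineq[OF zZ] unfolding e L_def by (auto split: if_splits)
    qed
    have main: "ennreal (lam * s powr \<alpha> / 2) \<le> expected_OT_error (\<lambda>x y. h (x - y)) n
      (distr (measure_pmf (pmf_of_set K)) borel (\<lambda>v. x0 + v))
      (distr (measure_pmf (pmf_of_set K)) borel (\<lambda>v. y0 + v))"
      using Ks by (intro key[OF Ks(2) Ks(3) Ks(6) n lin hc hpos]) (auto intro!: ineq simp: less_imp_le[OF lam] alpha)
    have inP: "distr (measure_pmf (pmf_of_set K)) borel (\<lambda>v. c0 + v) \<in> prob_measures S"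
      if "ball c0 r \<subseteq> S" for c0 S
    proof -
      have m: "(\<lambda>v. c0 + v) \<in> measure_pmf (pmf_of_set K) \<rightarrow>\<^sub>M (borel :: 'a measure)"
        by (simp add: measurable_pmf_measure1)
      have "AE x in distr (measure_pmf (pmf_of_set K)) borel (\<lambda>v. c0 + v). x \<in> (\<lambda>v. c0 + v) ` K"
        using m Ks by (subst AE_distr_iff) (auto intro!: AE_pmfI finite_borel simp: set_pmf_of_set[OF Ks(3) Ks(2)])
      moreover have "(\<lambda>v. c0 + v) ` K \<subseteq> S" using that Ks(4) by (auto simp: dist_norm)
      ultimately have "AE x in distr (measure_pmf (pmf_of_set K)) borel (\<lambda>v. c0 + v). x \<in> S"
        by (auto elim!: eventually_mono)
      thus ?thesis unfolding prob_measures_def using m by (auto intro: measure_pmf.prob_space_distr)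
    qed
    have num: "C * lam * real n powr (- \<alpha> / real DIM('a)) \<le> lam * s powr \<alpha> / 2"
    proof -
      have b0: "0 \<le> r / (4 * d) * real n powr (- 1 / d)" using r d1 by simp
      have "(r / (4 * d)) powr \<alpha> * real n powr (- \<alpha> / d) = (r / (4 * d) * real n powr (- 1 / d)) powr \<alpha>"
      proof -
        have "(r / (4 * d) * real n powr (- 1 / d)) powr \<alpha> = (r / (4 * d)) powr \<alpha> * (real n powr (- 1 / d)) powr \<alpha>"
          by (rule powr_mult)
        also have "(real n powr (- 1 / d)) powr \<alpha> = real n powr (- \<alpha> / d)"
          by (simp add: powr_powr)
        finally show ?thesis by simp
      qed
      also have "\<dots> \<le> s powr \<alpha>" using Ks(7) b0 alpha unfolding d_def by (intro powr_mono2) auto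
      finally have "(r / (4 * d)) powr \<alpha> * real n powr (- \<alpha> / d) \<le> s powr \<alpha>" .
      hence "lam * ((r / (4 * d)) powr \<alpha> * real n powr (- \<alpha> / d)) \<le> lam * s powr \<alpha>"
        using lam by (intro mult_left_mono) auto
      thus ?thesis unfolding C_def d_def by (simp add: field_simps)
    qed
    have "ennreal (C * lam * real n powr (- \<alpha> / real DIM('a))) \<le> ennreal (lam * s powr \<alpha> / 2)"
      by (rule ennreal_leI[OF num])
    also note main
    also have "expected_OT_error (\<lambda>x y. h (x - y)) n
      (distr (measure_pmf (pmf_of_set K)) borel (\<lambda>v. x0 + v))
      (distr (measure_pmf (pmf_of_set K)) borel (\<lambda>v. y0 + v))
      \<le> (SUP \<mu> \<in> prob_measures X. SUP \<nu> \<in> prob_measures Y. expected_OT_error (\<lambda>x y. h (x - y)) n \<mu> \<nu>)"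
      by (intro SUP_upper2[OF inP[OF rX]] SUP_upper[OF inP[OF rY]])
    finally show "(SUP \<mu> \<in> prob_measures X. SUP \<nu> \<in> prob_measures Y. expected_OT_error (\<lambda>x y. h (x - y)) n \<mu> \<nu>)
        \<ge> ennreal (C * lam * real n powr (- \<alpha> / real DIM('a)))" .
  qed
qed

end
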